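(* Let $G$ be a connected undirected graph with $n$ vertices and edge weights in $[1,W]$, weighted adjacency matrix $\mathbf{A}$ and degree matrix $\mathbf{D}$, and let $\nu_2$ be the second smallest eigenvalue of its normalised Laplacian $\mathbf{D}^{-1/2}(\mathbf{D}-\mathbf{A})\mathbf{D}^{-1/2}$. Let $\pi=\frac{\mathbf{D}\mathbf{1}}{\mathbf{1}^\top\mathbf{D}\mathbf{1}}$. Then for every vertex $u$, the vector $\sigma_u=\frac12\sum_{t=0}^\infty\left(\left(\frac12\mathbf{I}+\frac12\mathbf{A}\mathbf{D}^{-1}\right)^t\mathbf{1_u}-\pi\right)$ satisfies $\|\sigma_u\|_1=O(\nu_2^{-1}\log(nW))$.
   Context: $\mathbf{1_u}$ is the indicator vector of vertex $u$ and $\mathbf{1}$ the all-ones vector. *)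

theory Defs
  imports "Jordan_Normal_Form.Char_Poly" "HOL-Computational_Algebra.Polynomial"
begin

text \<open>A weighted undirected graph on vertex set {0..<n} is given by a weight function
  w :: nat => nat => real; w u v = 0 means "no edge".\<close>

definition weighted_graph :: "nat \<Rightarrow> (nat \<Rightarrow> nat \<Rightarrow> real) \<Rightarrow> real \<Rightarrow> bool" where
  "weighted_graph n w W \<longleftrightarrow>
     (\<forall>u<n. \<forall>v<n. w u v = w v u) \<and>
     (\<forall>u<n. w u u = 0) \<and>
     (\<forall>u<n. \<forall>v<n. w u v = 0 \<or> (1 \<le> w u v \<and> w u v \<le> W))"

definition graph_edges :: "nat \<Rightarrow> (nat \<Rightarrow> nat \<Rightarrow> real) \<Rightarrow> (nat \<times> nat) set" where
  "graph_edges n w = {(u, v). u < n \<and> v < n \<and> w u v \<noteq> 0}"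

definition connected_graph :: "nat \<Rightarrow> (nat \<Rightarrow> nat \<Rightarrow> real) \<Rightarrow> bool" where
  "connected_graph n w \<longleftrightarrow> (\<forall>u<n. \<forall>v<n. (u, v) \<in> (graph_edges n w)\<^sup>*)"

definition adj_mat :: "nat \<Rightarrow> (nat \<Rightarrow> nat \<Rightarrow> real) \<Rightarrow> real mat" where
  "adj_mat n w = mat n n (\<lambda>(i, j). w i j)"

definition wdeg :: "nat \<Rightarrow> (nat \<Rightarrow> nat \<Rightarrow> real) \<Rightarrow> nat \<Rightarrow> real" where
  "wdeg n w i = (\<Sum>j<n. w i j)"

definition deg_mat :: "nat \<Rightarrow> (nat \<Rightarrow> nat \<Rightarrow> real) \<Rightarrow> real mat" where
  "deg_mat n w = mat_diag n (wdeg n w)"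

definition deg_inv_sqrt_mat :: "nat \<Rightarrow> (nat \<Rightarrow> nat \<Rightarrow> real) \<Rightarrow> real mat" where
  "deg_inv_sqrt_mat n w = mat_diag n (\<lambda>i. 1 / sqrt (wdeg n w i))"

definition deg_inv_mat :: "nat \<Rightarrow> (nat \<Rightarrow> nat \<Rightarrow> real) \<Rightarrow> real mat" where
  "deg_inv_mat n w = mat_diag n (\<lambda>i. 1 / wdeg n w i)"

definition norm_laplacian :: "nat \<Rightarrow> (nat \<Rightarrow> nat \<Rightarrow> real) \<Rightarrow> real mat" where
  "norm_laplacian n w =
     deg_inv_sqrt_mat n w * (deg_mat n w - adj_mat n w) * deg_inv_sqrt_mat n w"

definition sorted_eigenvalues :: "real mat \<Rightarrow> real list" where
  "sorted_eigenvalues M = sorted_list_of_multiset (proots (char_poly M))"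

text \<open>Second smallest eigenvalue (index 1 in the 0-based sorted list).\<close>
definition second_smallest_eigenvalue :: "real mat \<Rightarrow> real" where
  "second_smallest_eigenvalue M = sorted_eigenvalues M ! 1"

definition lazy_walk_mat :: "nat \<Rightarrow> (nat \<Rightarrow> nat \<Rightarrow> real) \<Rightarrow> real mat" where
  "lazy_walk_mat n w =
     (1/2) \<cdot>\<^sub>m (1\<^sub>m n) + (1/2) \<cdot>\<^sub>m (adj_mat n w * deg_inv_mat n w)"

definition stat_dist :: "nat \<Rightarrow> (nat \<Rightarrow> nat \<Rightarrow> real) \<Rightarrow> real vec" where
  "stat_dist n w = vec n (\<lambda>v. wdeg n w v / (\<Sum>x<n. wdeg n w x))"

definition sigma_term :: "nat \<Rightarrow> (nat \<Rightarrow> nat \<Rightarrow> real) \<Rightarrow> nat \<Rightarrow> nat \<Rightarrow> real vec" where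
  "sigma_term n w u t = (lazy_walk_mat n w ^\<^sub>m t) *\<^sub>v unit_vec n u - stat_dist n w"

definition sigma_vec :: "nat \<Rightarrow> (nat \<Rightarrow> nat \<Rightarrow> real) \<Rightarrow> nat \<Rightarrow> real vec" where
  "sigma_vec n w u = vec n (\<lambda>v. (1/2) * (\<Sum>t. sigma_term n w u t $ v))"

definition norm1_vec :: "real vec \<Rightarrow> real" where
  "norm1_vec x = (\<Sum>i<dim_vec x. \<bar>x $ i\<bar>)"

end

theory Submission
  imports Defs "Jordan_Normal_Form.Schur_Decomposition"
begin

lemma sym_real_eig_real:
  fixes A :: "real mat"
  assumes A: "A \<in> carrier_mat n n" and sym: "\<And>i j. i < n \<Longrightarrow> j < n \<Longrightarrow> A $$ (i,j) = A $$ (j,i)"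
  and root: "poly (char_poly (map_mat complex_of_real A)) z = 0"
  shows "Im z = 0"
proof -
  define B where "B = map_mat complex_of_real A"
  have B: "B \<in> carrier_mat n n" using A unfolding B_def by auto
  have "eigenvalue B z" using root eigenvalue_root_char_poly[OF B] unfolding B_def by auto
  then obtain v where ev: "eigenvector B v z" unfolding eigenvalue_def by auto
  hence v: "v \<in> carrier_vec n" and v0: "v \<noteq> 0\<^sub>v n" and Bv: "B *\<^sub>v v = z \<cdot>\<^sub>v v"
    unfolding eigenvector_def using B by auto
  have Bvi: "(B *\<^sub>v v) $ i = (\<Sum>j<n. complex_of_real (A $$ (i,j)) * v $ j)" if i: "i < n" for i
    using i A v B unfolding B_def
    by (subst index_mult_mat_vec, force, unfold scalar_prod_def, auto simp: atLeast0LessThan intro!: sum.cong)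
  define s where "s = (\<Sum>i<n. cnj (v $ i) * (B *\<^sub>v v) $ i)"
  define r where "r = (\<Sum>i<n. (cmod (v $ i))^2)"
  have s1: "s = z * complex_of_real r"
  proof -
    have "s = (\<Sum>i<n. cnj (v $ i) * (z * v $ i))"
      unfolding s_def Bv using v by (auto intro!: sum.cong)
    also have "\<dots> = z * (\<Sum>i<n. cnj (v $ i) * v $ i)"
      by (simp add: sum_distrib_left algebra_simps)
    also have "(\<Sum>i<n. cnj (v $ i) * v $ i) = complex_of_real r"
      unfolding r_def of_real_sum by (intro sum.cong refl, metis complex_norm_square mult.commute of_real_power)
    finally show ?thesis .
  qed
  have s2: "s = (\<Sum>i<n. \<Sum>j<n. complex_of_real (A $$ (i,j)) * (cnj (v $ i) * v $ j))"
    unfolding s_def by (intro sum.cong refl, simp add: Bvi sum_distrib_left algebra_simps)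
  have "cnj s = (\<Sum>i<n. \<Sum>j<n. complex_of_real (A $$ (i,j)) * (v $ i * cnj (v $ j)))"
    unfolding s2 by (simp add: cnj_sum)
  also have "\<dots> = (\<Sum>j<n. \<Sum>i<n. complex_of_real (A $$ (i,j)) * (v $ i * cnj (v $ j)))"
    by (rule sum.swap)
  also have "\<dots> = s"
    unfolding s2 by (intro sum.cong refl, simp add: sym mult.commute)
  finally have "Im s = 0" by (metis cnj.simps(2) neg_equal_zero)
  hence "Im z * r = 0" unfolding s1 by simp
  moreover have "r > 0"
  proof -
    from v0 v obtain i where i: "i < n" "v $ i \<noteq> 0" by (metis eq_vecI carrier_vecD index_zero_vec(1,2))
    have "(cmod (v $ i))^2 \<le> r" unfolding r_def
      by (rule member_le_sum[of i "{..<n}" "\<lambda>i. (cmod (v $ i))^2"], insert i, auto)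
    moreover have "(cmod (v $ i))^2 > 0" using i by simp
    ultimately show ?thesis by linarith
  qed
  ultimately show ?thesis by simp
qed

lemma sym_char_poly_split:
  fixes A :: "real mat"
  assumes A: "A \<in> carrier_mat n n" and sym: "\<And>i j. i < n \<Longrightarrow> j < n \<Longrightarrow> A $$ (i,j) = A $$ (j,i)"
  shows "\<exists>rs. char_poly A = (\<Prod>r\<leftarrow>rs. [:-r, 1:]) \<and> length rs = n"
proof -
  interpret ph: map_poly_inj_idom_hom "complex_of_real" ..
  define B where "B = map_mat complex_of_real A"
  have B: "B \<in> carrier_mat n n" using A unfolding B_def by auto
  from char_poly_factorized[OF B] obtain as where cp: "char_poly B = (\<Prod>a\<leftarrow>as. [:- a, 1:])"
    and len: "length as = n" by auto
  have real: "Im a = 0" if a: "a \<in> set as" for a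
  proof -
    have "poly (char_poly B) a = 0" unfolding cp using a
      by (induct as, auto)
    thus ?thesis using sym_real_eig_real[OF A sym] unfolding B_def by auto
  qed
  define rs where "rs = map Re as"
  have as: "as = map complex_of_real rs" unfolding rs_def using real
    by (induct as, auto simp: complex_eq_iff)
  have "map_poly complex_of_real (char_poly A) = char_poly B"
    unfolding B_def by (rule of_real_hom.char_poly_hom[OF A, symmetric])
  also have "\<dots> = map_poly complex_of_real (\<Prod>r\<leftarrow>rs. [:-r, 1:])"
    unfolding cp as ph.hom_prod_list by (simp add: o_def)
  finally have "char_poly A = (\<Prod>r\<leftarrow>rs. [:-r, 1:])" by simp
  thus ?thesis using len by (metis length_map rs_def)
qed


lemma conjugate_real_vec[simp]: "conjugate (v :: real vec) = v"
  by (rule eq_vecI, auto)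

lemma self_sprod_real_ge0: "(v :: real vec) \<bullet> v \<ge> 0"
  using conjugate_square_ge_0_vec[of v] by simp

lemma spectral_sym:
  fixes A :: "real mat"
  assumes "A \<in> carrier_mat n n" "transpose_mat A = A" "char_poly A = (\<Prod>e\<leftarrow>es. [:-e, 1:])"
  shows "\<exists>P \<in> carrier_mat n n. transpose_mat P * P = 1\<^sub>m n \<and> P * transpose_mat P = 1\<^sub>m n \<and>
     transpose_mat P * A * P = mat n n (\<lambda>(i,j). if i = j then es ! i else 0)"
  using assms
proof (induct es arbitrary: n A)
  case Nil
  with degree_monic_char_poly[of A n] have n: "n = 0" by auto
  show ?case
    by (rule bexI[of _ "1\<^sub>m n"], rule conjI, (rule eq_matI, auto simp: n)+)
next
  case (Cons e es n A)
  from Cons have A: "A \<in> carrier_mat n n" and symA: "transpose_mat A = A" by auto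
  have cp: "char_poly A = [: -e, 1 :] * (\<Prod>e \<leftarrow> es. [:- e, 1:])" using Cons by auto
  have mon: "monic (\<Prod>e\<leftarrow> es. [:- e, 1:])" by (rule monic_prod_list, auto)
  have deg: "degree (char_poly A) = Suc (degree (\<Prod>e\<leftarrow> es. [:- e, 1:]))" unfolding cp
    by (subst degree_mult_eq, insert mon, auto)
  with degree_monic_char_poly[OF A] obtain m where nm: "n = Suc m" by (cases n, auto)
  have e: "eigenvalue A e" unfolding eigenvalue_root_char_poly[OF A] cp by simp
  then obtain v where "eigenvector A v e" unfolding eigenvalue_def by auto
  hence v: "v \<in> carrier_vec n" and v0: "v \<noteq> 0\<^sub>v n" and Av: "A *\<^sub>v v = e \<cdot>\<^sub>v v"
    unfolding eigenvector_def using A by auto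
  interpret cof_vec_space n "TYPE(real)" .
  define b where "b = basis_completion v"
  from basis_completion[OF v v0, folded b_def]
  have dist_b: "distinct b" and indep: "\<not> lin_dep (set b)" and b: "set b \<subseteq> carrier_vec n" 
    and hdb: "hd b = v" and len_b: "length b = n" by auto
  from hdb len_b nm obtain vs where bv: "b = v # vs" by (cases b, auto)
  define ws where "ws = gram_schmidt n b"
  from gram_schmidt_result[OF b dist_b indep refl, folded ws_def]
  have ws: "set ws \<subseteq> carrier_vec n" "corthogonal ws" "length ws = n" 
    by (auto simp: len_b)
  from gram_schmidt_hd[OF v, of vs, folded bv] have hdws: "hd ws = v" unfolding ws_def .
  have ws0: "ws ! 0 = v" using hdws ws(3) nm by (cases ws, auto)
  have wsc: "ws ! i \<in> carrier_vec n" if "i < n" for i using ws that by auto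
  have wsorth: "ws ! i \<bullet> ws ! j = 0 \<longleftrightarrow> i \<noteq> j" if "i < n" "j < n" for i j
    using corthogonalD[OF ws(2)] that ws(3) by auto
  have wspos: "ws ! i \<bullet> ws ! i > 0" if "i < n" for i
    using wsorth[OF that that] self_sprod_real_ge0[of "ws ! i"] by linarith
  define us where "us = map (\<lambda>w. (1 / sqrt (w \<bullet> w)) \<cdot>\<^sub>v w) ws"
  have len_us: "length us = n" unfolding us_def using ws by auto
  have usi: "us ! i = (1 / sqrt (ws ! i \<bullet> ws ! i)) \<cdot>\<^sub>v ws ! i" if "i < n" for i
    unfolding us_def using that ws(3) by auto
  have usc: "us ! i \<in> carrier_vec n" if "i < n" for i using usi[OF that] wsc[OF that] by auto
  have usorth: "us ! i \<bullet> us ! j = (if i = j then 1 else 0)" if ij: "i < n" "j < n" for i j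
  proof -
    have "us ! i \<bullet> us ! j = (1 / sqrt (ws ! i \<bullet> ws ! i)) * (1 / sqrt (ws ! j \<bullet> ws ! j)) * (ws ! i \<bullet> ws ! j)"
      unfolding usi[OF ij(1)] usi[OF ij(2)] using wsc[OF ij(1)] wsc[OF ij(2)] by simp
    thus ?thesis using wsorth[OF ij] wspos[OF ij(1)] 
      by (cases "i = j", auto simp: real_sqrt_mult[symmetric])
  qed
  define u0 where "u0 = us ! 0"
  have u0: "u0 = (1 / sqrt (v \<bullet> v)) \<cdot>\<^sub>v v" unfolding u0_def using usi[of 0] ws0 nm by auto
  have Au0: "A *\<^sub>v u0 = e \<cdot>\<^sub>v u0" unfolding u0 using A v Av
    by (simp add: mult_mat_vec smult_smult_assoc mult.commute)
  define W where "W = mat_of_cols n us"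
  have W: "W \<in> carrier_mat n n" unfolding W_def using len_us by (metis mat_of_cols_carrier(1))
  have colW: "col W i = us ! i" if "i < n" for i unfolding W_def using that len_us usc by auto
  have WtW: "transpose_mat W * W = 1\<^sub>m n"
    by (rule eq_matI, insert W, auto simp: colW usorth)
  have WWt: "W * transpose_mat W = 1\<^sub>m n"
    by (rule mat_mult_left_right_inverse[OF _ W WtW], insert W, auto)
  define A' where "A' = transpose_mat W * A * W"
  have A': "A' \<in> carrier_mat n n" unfolding A'_def using W A by auto
  have symA': "transpose_mat A' = A'"
  proof -
    have "transpose_mat A' = transpose_mat W * transpose_mat (transpose_mat W * A)"
      unfolding A'_def by (rule transpose_mult[of _ n n _ n], insert W A, auto)
    also have "\<dots> = transpose_mat W * (transpose_mat A * W)"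
      by (subst transpose_mult[of _ n n _ n], insert W A, auto)
    also have "\<dots> = A'" unfolding A'_def symA using W A by simp
    finally show ?thesis .
  qed
  have A'sym: "A' $$ (i,j) = A' $$ (j,i)" if "i < n" "j < n" for i j
    using arg_cong[OF symA', of "\<lambda>M. M $$ (j,i)"] that A' by auto
  have A'col: "A' $$ (i,0) = (if i = 0 then e else 0)" if i: "i < n" for i
  proof -
    have "A' = transpose_mat W * (A * W)" unfolding A'_def using W A by auto
    hence "A' $$ (i,0) = col W i \<bullet> col (A * W) 0" using i W A nm by auto
    also have "col (A * W) 0 = A *\<^sub>v u0" using A W nm colW[of 0] unfolding u0_def by auto
    also have "\<dots> = e \<cdot>\<^sub>v u0" by (rule Au0)
    also have "col W i \<bullet> (e \<cdot>\<^sub>v u0) = e * (us ! i \<bullet> u0)" 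
      using colW[OF i] usc[OF i] usc[of 0] nm unfolding u0_def by auto
    also have "\<dots> = (if i = 0 then e else 0)" unfolding u0_def using usorth[of i 0] i nm by auto
    finally show ?thesis .
  qed
  define A3 where "A3 = mat m m (\<lambda>(i,j). A' $$ (Suc i, Suc j))"
  define E where "E = mat 1 1 (\<lambda>_. e)"
  have A3: "A3 \<in> carrier_mat m m" unfolding A3_def by auto
  have E: "E \<in> carrier_mat 1 1" unfolding E_def by auto
  have A'block: "A' = four_block_mat E (0\<^sub>m 1 m) (0\<^sub>m m 1) A3"
  proof (rule eq_matI)
    fix i j assume i: "i < dim_row (four_block_mat E (0\<^sub>m 1 m) (0\<^sub>m m 1) A3)" 
      and j: "j < dim_col (four_block_mat E (0\<^sub>m 1 m) (0\<^sub>m m 1) A3)"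
    hence i: "i < n" and j: "j < n" using E A3 nm by auto
    show "A' $$ (i, j) = four_block_mat E (0\<^sub>m 1 m) (0\<^sub>m m 1) A3 $$ (i, j)"
    proof (cases "i = 0 \<or> j = 0")
      case True
      thus ?thesis using A'col[OF i] A'col[OF j] A'sym[OF i j] i j E A3 nm
        by (auto simp: E_def)
    next
      case False
      then obtain i' j' where "i = Suc i'" "j = Suc j'" by (cases i; cases j; auto)
      thus ?thesis using i j E A3 nm by (auto simp: A3_def)
    qed
  qed (insert E A3 A' nm, auto)
  have "similar_mat A' A"
    by (rule similar_matI[of _ _ "transpose_mat W" W n], insert A' A W WtW WWt, auto simp: A'_def)
  from char_poly_similar[OF this] cp
  have "char_poly A' = [: -e,1 :] * (\<Prod> e \<leftarrow> es. [:- e, 1:])" by simp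
  also have "char_poly A' = char_poly E * char_poly A3" 
    unfolding A'block by (rule char_poly_four_block_zeros_col[OF E _ A3], auto)
  also have "char_poly E = [: -e,1 :]"
    by (simp add: E_def char_poly_defs det_def sign_def)
  finally have cp3: "char_poly A3 = (\<Prod> e \<leftarrow> es. [:- e, 1:])"
    by (metis mult_cancel_left pCons_eq_0_iff zero_neq_one)
  have symA3: "transpose_mat A3 = A3"
    by (rule eq_matI, insert A3 A'sym nm, auto simp: A3_def)
  from Cons(1)[OF A3 symA3 cp3] obtain P3 where P3: "P3 \<in> carrier_mat m m"
    and P3a: "transpose_mat P3 * P3 = 1\<^sub>m m" and P3b: "P3 * transpose_mat P3 = 1\<^sub>m m"
    and P3c: "transpose_mat P3 * A3 * P3 = mat m m (\<lambda>(i,j). if i = j then es ! i else 0)" by auto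
  define F where "F = four_block_mat (1\<^sub>m 1) (0\<^sub>m 1 m) (0\<^sub>m m 1) P3"
  have F: "F \<in> carrier_mat n n" unfolding F_def using P3 nm by auto
  have Ft: "transpose_mat F = four_block_mat (1\<^sub>m 1) (0\<^sub>m 1 m) (0\<^sub>m m 1) (transpose_mat P3)"
    unfolding F_def by (subst transpose_four_block_mat, insert P3, auto)
  have FtF: "transpose_mat F * F = 1\<^sub>m n"
    unfolding Ft unfolding F_def
    by (subst mult_four_block_mat, insert P3 P3a nm, auto)
  have FFt: "F * transpose_mat F = 1\<^sub>m n"
    unfolding Ft unfolding F_def
    by (subst mult_four_block_mat, insert P3 P3b nm, auto)
  define P where "P = W * F"
  have P: "P \<in> carrier_mat n n" unfolding P_def using W F by auto
  have Pt: "transpose_mat (W * F) = transpose_mat F * transpose_mat W"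
    using W F by (simp add: transpose_mult[of _ n n])
  have "transpose_mat P * P = transpose_mat F * (transpose_mat W * W) * F"
    unfolding P_def Pt using W F by (simp add: assoc_mult_mat[of _ n n _ n _ n])
  also have "\<dots> = 1\<^sub>m n" using WtW FtF F by simp
  finally have PtP: "transpose_mat P * P = 1\<^sub>m n" .
  have "P * transpose_mat P = W * (F * transpose_mat F) * transpose_mat W"
    unfolding P_def Pt using W F by (simp add: assoc_mult_mat[of _ n n _ n _ n])
  also have "\<dots> = 1\<^sub>m n" using WWt FFt W by simp
  finally have PPt: "P * transpose_mat P = 1\<^sub>m n" .
  have "transpose_mat P * A * P = transpose_mat F * A' * F"
    unfolding P_def Pt A'_def using W F A by (simp add: assoc_mult_mat[of _ n n _ n _ n])
  also have "\<dots> = four_block_mat E (0\<^sub>m 1 m) (0\<^sub>m m 1) (transpose_mat P3 * A3 * P3)"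
    unfolding Ft A'block unfolding F_def
    by (subst mult_four_block_mat, insert P3 E A3, auto, subst mult_four_block_mat, insert P3 E A3, auto)
  also have "\<dots> = mat n n (\<lambda>(i,j). if i = j then (e # es) ! i else 0)"
    unfolding P3c
  proof (rule eq_matI)
    fix i j assume i: "i < dim_row (mat n n (\<lambda>(i,j). if i = j then (e # es) ! i else 0))" 
      and j: "j < dim_col (mat n n (\<lambda>(i,j). if i = j then (e # es) ! i else 0))"
    hence i: "i < n" and j: "j < n" by auto
    show "four_block_mat E (0\<^sub>m 1 m) (0\<^sub>m m 1) (mat m m (\<lambda>(i,j). if i = j then es ! i else 0)) $$ (i, j)
       = mat n n (\<lambda>(i,j). if i = j then (e # es) ! i else 0) $$ (i, j)"
      using i j nm by (cases i; cases j; auto simp: E_def)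
  qed (insert nm E, auto)
  finally show ?case using P PtP PPt by blast
qed


locale wgraph =
  fixes n :: nat and w :: "nat \<Rightarrow> nat \<Rightarrow> real" and W :: real
  assumes n2: "2 \<le> n" and W1: "1 \<le> W" and wg: "weighted_graph n w W" and conn: "connected_graph n w"
begin

abbreviation d where "d \<equiv> wdeg n w"

lemma wsym: "i < n \<Longrightarrow> j < n \<Longrightarrow> w i j = w j i"
  using wg unfolding weighted_graph_def by auto
lemma wdiag: "i < n \<Longrightarrow> w i i = 0"
  using wg unfolding weighted_graph_def by auto
lemma wnn: "i < n \<Longrightarrow> j < n \<Longrightarrow> 0 \<le> w i j"
  using wg unfolding weighted_graph_def by force
lemma wle: "i < n \<Longrightarrow> j < n \<Longrightarrow> w i j \<le> W"
  using wg W1 unfolding weighted_graph_def by force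
lemma wne: "i < n \<Longrightarrow> j < n \<Longrightarrow> w i j \<noteq> 0 \<Longrightarrow> 1 \<le> w i j"
  using wg unfolding weighted_graph_def by force

lemma d_def': "d i = (\<Sum>j<n. w i j)" unfolding wdeg_def by simp

lemma d_ge1: assumes i: "i < n" shows "1 \<le> d i"
proof -
  define j :: nat where "j = (if i = 0 then 1 else 0)"
  have j: "j < n" "j \<noteq> i" using n2 i unfolding j_def by auto
  have "(i, j) \<in> (graph_edges n w)\<^sup>*" using conn i j unfolding connected_graph_def by auto
  then obtain k where "(i, k) \<in> graph_edges n w"
    using j(2) by (metis converse_rtranclE)
  hence k: "k < n" "w i k \<noteq> 0" unfolding graph_edges_def by auto
  have "w i k \<le> d i" unfolding d_def'
    by (rule member_le_sum[of k "{..<n}" "w i"], insert k i wnn, auto)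
  with wne[OF i k(1) k(2)] show ?thesis by linarith
qed

lemma d_pos: "i < n \<Longrightarrow> 0 < d i" using d_ge1 by force

lemma d_le: assumes i: "i < n" shows "d i \<le> real n * W"
proof -
  have "d i \<le> (\<Sum>j<n. W)" unfolding d_def' by (rule sum_mono, insert wle i, auto)
  thus ?thesis by simp
qed

abbreviation L where "L \<equiv> norm_laplacian n w"

lemma L_carrier: "L \<in> carrier_mat n n"
  unfolding norm_laplacian_def deg_inv_sqrt_mat_def deg_mat_def adj_mat_def carrier_mat_def by (simp add: mat_diag_def)

lemma L_entry: assumes i: "i < n" and j: "j < n"
  shows "L $$ (i,j) = (if i = j then 1 else 0) - w i j / (sqrt (d i) * sqrt (d j))"
proof -
  have c: "mat_diag n (wdeg n w) - adj_mat n w \<in> carrier_mat n n" unfolding adj_mat_def by auto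
  have c2: "mat_diag n (\<lambda>i. 1 / sqrt (d i)) * (mat_diag n (wdeg n w) - adj_mat n w) \<in> carrier_mat n n"
    using c unfolding carrier_mat_def by (simp add: mat_diag_def)
  have "L $$ (i,j) = (1 / sqrt (d i)) * ((mat_diag n (wdeg n w) - adj_mat n w) $$ (i,j)) * (1 / sqrt (d j))"
    unfolding norm_laplacian_def deg_inv_sqrt_mat_def deg_mat_def
    by (subst mat_diag_mult_right[OF c2], subst mat_diag_mult_left[OF c], insert i j, simp)
  also have "(mat_diag n (wdeg n w) - adj_mat n w) $$ (i,j) = (if i = j then d i else 0) - w i j"
    using i j unfolding adj_mat_def mat_diag_def by auto
  finally show ?thesis using d_pos[OF i] wdiag[OF i]
    by (cases "i = j", auto simp: field_simps real_sqrt_mult[symmetric])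
qed

lemma L_sym: "transpose_mat L = L"
  by (rule eq_matI, insert L_carrier, auto simp: L_entry wsym mult.commute)

abbreviation M where "M \<equiv> lazy_walk_mat n w"

lemma M_carrier: "M \<in> carrier_mat n n"
  unfolding lazy_walk_mat_def adj_mat_def deg_inv_mat_def carrier_mat_def by (simp add: mat_diag_def)

lemma M_entry: assumes i: "i < n" and j: "j < n"
  shows "M $$ (i,j) = (if i = j then 1/2 else 0) + w i j / (2 * d j)"
proof -
  have c: "adj_mat n w \<in> carrier_mat n n" unfolding adj_mat_def by auto
  show ?thesis unfolding lazy_walk_mat_def deg_inv_mat_def
    by (subst mat_diag_mult_right[OF c], insert i j, auto simp: adj_mat_def)
qed

lemma M_mult: assumes x: "x \<in> carrier_vec n" and v: "v < n"
  shows "(M *\<^sub>v x) $ v = x $ v / 2 + (\<Sum>j<n. w v j * x $ j / d j) / 2"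
proof -
  have "(M *\<^sub>v x) $ v = (\<Sum>j<n. M $$ (v,j) * x $ j)"
    using M_carrier x v by (auto simp: scalar_prod_def atLeast0LessThan intro!: sum.cong)
  also have "\<dots> = (\<Sum>j<n. (if v = j then x $ j / 2 else 0) + w v j * x $ j / d j / 2)"
    by (intro sum.cong refl, auto simp: M_entry v algebra_simps)
  also have "\<dots> = x $ v / 2 + (\<Sum>j<n. w v j * x $ j / d j) / 2"
    using v by (simp add: sum.distrib sum_divide_distrib)
  finally show ?thesis .
qed

end

lemma proots_linear_prod: "proots (\<Prod>r\<leftarrow>rs. [:-r, 1:]) = mset (rs :: real list)"
proof (induct rs)
  case (Cons r rs)
  have nz: "(\<Prod>r\<leftarrow>rs. [:-r, 1:]) \<noteq> (0 :: real poly)"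
    by (auto simp: prod_list_zero_iff)
  have "proots ([:-r, 1:] * (\<Prod>r\<leftarrow>rs. [:-r, 1:])) = proots [:-r, 1:] + proots (\<Prod>r\<leftarrow>rs. [:-r, 1:])"
    by (rule proots_mult, simp, fact nz)
  also have "proots [:-r, 1:] = {#r#}" using proots_linear_factor[of "-r"] by simp
  finally have "proots ([:-r, 1:] * (\<Prod>r\<leftarrow>rs. [:-r, 1:])) = {#r#} + mset rs" using Cons by simp
  thus ?case by (simp only: list.map prod_list.Cons mset.simps, simp)
qed simp

context wgraph begin

abbreviation es where "es \<equiv> sorted_eigenvalues L"

lemma es_props: "length es = n \<and> sorted es \<and> char_poly L = (\<Prod>e\<leftarrow>es. [:-e, 1:])"
proof -
  have symL: "\<And>i j. i < n \<Longrightarrow> j < n \<Longrightarrow> L $$ (i,j) = L $$ (j,i)"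
    using L_entry wsym by (auto simp: mult.commute)
  from sym_char_poly_split[OF L_carrier symL] obtain rs where
    cp: "char_poly L = (\<Prod>r\<leftarrow>rs. [:-r, 1:])" and len: "length rs = n" by auto
  have es: "es = sort rs" unfolding sorted_eigenvalues_def cp proots_linear_prod by simp
  have "(\<Prod>e\<leftarrow>es. [:-e, 1:]) = prod_mset (mset (map (\<lambda>e. [:-e, 1:]) es))"
    by (metis prod_mset_prod_list)
  also have "mset (map (\<lambda>e. [:-e, 1:]) es) = mset (map (\<lambda>e. [:-e, 1:]) rs)"
    unfolding es by simp
  also have "prod_mset \<dots> = char_poly L" unfolding cp by (metis prod_mset_prod_list)
  finally show ?thesis using len es by simp
qed

lemma exists_P: "\<exists>P\<in>carrier_mat n n. transpose_mat P * P = 1\<^sub>m n \<and> P * transpose_mat P = 1\<^sub>m n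
   \<and> L * P = P * mat_diag n (\<lambda>i. es ! i)"
proof -
  from spectral_sym[OF L_carrier L_sym] es_props obtain P where P: "P \<in> carrier_mat n n"
    and a: "transpose_mat P * P = 1\<^sub>m n" and b: "P * transpose_mat P = 1\<^sub>m n"
    and c: "transpose_mat P * L * P = mat n n (\<lambda>(i,j). if i = j then es ! i else 0)" by blast
  have c': "transpose_mat P * L * P = mat_diag n (\<lambda>i. es ! i)"
    unfolding c mat_diag_def by (rule eq_matI, auto)
  have "L * P = (P * transpose_mat P) * L * P" unfolding b using L_carrier P by simp
  also have "\<dots> = P * (transpose_mat P * L * P)" using L_carrier P by (simp add: assoc_mult_mat[of _ n n _ n _ n])
  finally show ?thesis using P a b c' by auto
qed

lemma quad_aux:
  fixes x :: "nat \<Rightarrow> real"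
  defines "y \<equiv> \<lambda>k. x k / sqrt (d k)"
  shows "(\<Sum>k<n. \<Sum>l<n. w k l * (y k)^2) = (\<Sum>k<n. (x k)^2)"
    and "(\<Sum>k<n. \<Sum>l<n. w k l * (y l)^2) = (\<Sum>k<n. (x k)^2)"
    and "(\<Sum>k<n. x k * (\<Sum>l<n. L $$ (k,l) * x l)) = (\<Sum>k<n. (x k)^2) - (\<Sum>k<n. \<Sum>l<n. w k l * (y k * y l))"
proof -
  show A: "(\<Sum>k<n. \<Sum>l<n. w k l * (y k)^2) = (\<Sum>k<n. (x k)^2)"
  proof (intro sum.cong refl)
    fix k assume k: "k \<in> {..<n}"
    have "(\<Sum>l<n. w k l * (y k)^2) = d k * (y k)^2" unfolding d_def' by (simp add: sum_distrib_right)
    also have "\<dots> = (x k)^2" using d_pos[of k] k unfolding y_def by (simp add: power_divide)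
    finally show "(\<Sum>l<n. w k l * (y k)^2) = (x k)^2" .
  qed
  have "(\<Sum>k<n. \<Sum>l<n. w k l * (y l)^2) = (\<Sum>l<n. \<Sum>k<n. w k l * (y l)^2)" by (rule sum.swap)
  also have "\<dots> = (\<Sum>l<n. \<Sum>k<n. w l k * (y l)^2)" by (intro sum.cong refl, simp add: wsym)
  finally show "(\<Sum>k<n. \<Sum>l<n. w k l * (y l)^2) = (\<Sum>k<n. (x k)^2)" using A by simp
  have "(\<Sum>k<n. x k * (\<Sum>l<n. L $$ (k,l) * x l)) = (\<Sum>k<n. (x k)^2 - (\<Sum>l<n. w k l * (y k * y l)))"
  proof (intro sum.cong refl)
    fix k assume k: "k \<in> {..<n}"
    have "(\<Sum>l<n. L $$ (k,l) * x l) = (\<Sum>l<n. (if k = l then x l else 0) - w k l * x l / (sqrt (d k) * sqrt (d l)))"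
      by (intro sum.cong refl, insert k, auto simp: L_entry algebra_simps)
    also have "\<dots> = x k - (\<Sum>l<n. w k l * x l / (sqrt (d k) * sqrt (d l)))"
      using k by (simp add: sum_subtractf)
    finally have "x k * (\<Sum>l<n. L $$ (k,l) * x l) = x k * (x k - (\<Sum>l<n. w k l * x l / (sqrt (d k) * sqrt (d l))))"
      by simp
    also have "\<dots> = (x k)^2 - (\<Sum>l<n. x k * (w k l * x l / (sqrt (d k) * sqrt (d l))))"
      by (simp only: power2_eq_square right_diff_distrib sum_distrib_left)
    also have "(\<Sum>l<n. x k * (w k l * x l / (sqrt (d k) * sqrt (d l)))) = (\<Sum>l<n. w k l * (y k * y l))"
      unfolding y_def by (intro sum.cong refl, simp add: field_simps)
    finally show "x k * (\<Sum>l<n. L $$ (k,l) * x l) = (x k)^2 - (\<Sum>l<n. w k l * (y k * y l))" .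
  qed
  thus "(\<Sum>k<n. x k * (\<Sum>l<n. L $$ (k,l) * x l)) = (\<Sum>k<n. (x k)^2) - (\<Sum>k<n. \<Sum>l<n. w k l * (y k * y l))"
    by (simp add: sum_subtractf)
qed

lemma quad:
  fixes x :: "nat \<Rightarrow> real"
  shows "(\<Sum>k<n. x k * (\<Sum>l<n. L $$ (k,l) * x l)) = (\<Sum>k<n. \<Sum>l<n. w k l * (x k / sqrt (d k) - x l / sqrt (d l))^2) / 2"
    and "2 * (\<Sum>k<n. (x k)^2) - (\<Sum>k<n. x k * (\<Sum>l<n. L $$ (k,l) * x l)) = (\<Sum>k<n. \<Sum>l<n. w k l * (x k / sqrt (d k) + x l / sqrt (d l))^2) / 2"
proof -
  define y where "y = (\<lambda>k. x k / sqrt (d k))"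
  note q = quad_aux[of x, folded y_def]
  have t1: "w k l * (y k - y l)^2 = w k l * (y k)^2 + w k l * (y l)^2 - 2 * (w k l * (y k * y l))" for k l
    by (simp add: power2_eq_square algebra_simps)
  have t2: "w k l * (y k + y l)^2 = w k l * (y k)^2 + w k l * (y l)^2 + 2 * (w k l * (y k * y l))" for k l
    by (simp add: power2_eq_square algebra_simps)
  have e1: "(\<Sum>k<n. \<Sum>l<n. w k l * (y k - y l)^2) = (\<Sum>k<n. \<Sum>l<n. w k l * (y k)^2) + (\<Sum>k<n. \<Sum>l<n. w k l * (y l)^2) - 2 * (\<Sum>k<n. \<Sum>l<n. w k l * (y k * y l))"
    unfolding t1 by (simp only: sum.distrib sum_subtractf sum_distrib_left)
  have e2: "(\<Sum>k<n. \<Sum>l<n. w k l * (y k + y l)^2) = (\<Sum>k<n. \<Sum>l<n. w k l * (y k)^2) + (\<Sum>k<n. \<Sum>l<n. w k l * (y l)^2) + 2 * (\<Sum>k<n. \<Sum>l<n. w k l * (y k * y l))"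
    unfolding t2 by (simp only: sum.distrib sum_distrib_left)
  show "(\<Sum>k<n. x k * (\<Sum>l<n. L $$ (k,l) * x l)) = (\<Sum>k<n. \<Sum>l<n. w k l * (x k / sqrt (d k) - x l / sqrt (d l))^2) / 2"
    using e1 q(3) q(1) q(2) unfolding y_def by linarith
  show "2 * (\<Sum>k<n. (x k)^2) - (\<Sum>k<n. x k * (\<Sum>l<n. L $$ (k,l) * x l)) = (\<Sum>k<n. \<Sum>l<n. w k l * (x k / sqrt (d k) + x l / sqrt (d l))^2) / 2"
    using e2 q(3) q(1) q(2) unfolding y_def by linarith
qed

end

context wgraph begin

lemma quad_nonneg: "(\<Sum>k<n. x k * (\<Sum>l<n. L $$ (k,l) * x l)) \<ge> 0"
proof -
  have "0 \<le> (\<Sum>k<n. \<Sum>l<n. w k l * (x k / sqrt (d k) - x l / sqrt (d l))^2)"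
    by (rule sum_nonneg, rule sum_nonneg, rule mult_nonneg_nonneg, rule wnn, auto)
  thus ?thesis unfolding quad(1) by simp
qed

lemma quad_le: "(\<Sum>k<n. x k * (\<Sum>l<n. L $$ (k,l) * x l)) \<le> 2 * (\<Sum>k<n. (x k)^2)"
proof -
  have "0 \<le> (\<Sum>k<n. \<Sum>l<n. w k l * (x k / sqrt (d k) + x l / sqrt (d l))^2)"
    by (rule sum_nonneg, rule sum_nonneg, rule mult_nonneg_nonneg, rule wnn, auto)
  thus ?thesis using quad(2)[of x] by linarith
qed

lemma quad_zero:
  assumes "(\<Sum>k<n. x k * (\<Sum>l<n. L $$ (k,l) * x l)) = 0"
  shows "\<forall>k<n. x k = (x 0 / sqrt (d 0)) * sqrt (d k)"
proof -
  define y where "y = (\<lambda>k. x k / sqrt (d k))"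
  define f where "f = (\<lambda>k l. w k l * (y k - y l)^2)"
  have fnn: "0 \<le> f k l" if "k < n" "l < n" for k l
    unfolding f_def by (rule mult_nonneg_nonneg, rule wnn, insert that, auto)
  have "(\<Sum>k<n. \<Sum>l<n. f k l) = 0" using assms unfolding quad(1) y_def f_def by simp
  moreover have inn: "\<forall>k\<in>{..<n}. 0 \<le> (\<Sum>l<n. f k l)" using fnn by (auto intro!: sum_nonneg)
  ultimately have z: "(\<Sum>l<n. f k l) = 0" if "k < n" for k
    using sum_nonneg_eq_0_iff[of "{..<n}" "\<lambda>k. \<Sum>l<n. f k l"] that by auto
  have edge: "y k = y l" if "(k,l) \<in> graph_edges n w" for k l
  proof -
    from that have kl: "k < n" "l < n" "w k l \<noteq> 0" unfolding graph_edges_def by auto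
    from z[OF kl(1)] have "f k l = 0"
      using sum_nonneg_eq_0_iff[of "{..<n}" "f k"] fnn kl by simp
    with kl show ?thesis unfolding f_def by simp
  qed
  have yk: "y k = y 0" if k: "k < n" for k
  proof -
    have "(0, k) \<in> (graph_edges n w)\<^sup>*" using conn k n2 unfolding connected_graph_def by auto
    thus ?thesis
    proof (induct rule: rtrancl_induct)
      case (step a b)
      thus ?case using edge[of a b] by simp
    qed simp
  qed
  show ?thesis
  proof (intro allI impI)
    fix k assume k: "k < n"
    have pos: "sqrt (d k) > 0" using d_pos[OF k] by simp
    have "x k = y k * sqrt (d k)" unfolding y_def using pos by simp
    also have "y k = y 0" using yk[OF k] .
    finally show "x k = x 0 / sqrt (d 0) * sqrt (d k)" unfolding y_def .
  qed
qed

lemma g_kernel: "k < n \<Longrightarrow> (\<Sum>l<n. L $$ (k,l) * sqrt (d l)) = 0"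
proof -
  assume k: "k < n"
  have "(\<Sum>l<n. L $$ (k,l) * sqrt (d l)) = (\<Sum>l<n. (if k = l then sqrt (d l) else 0) - w k l / sqrt (d k))"
  proof (intro sum.cong refl)
    fix l assume "l \<in> {..<n}"
    hence l: "l < n" by auto
    have "sqrt (d l) > 0" "sqrt (d k) > 0" using d_pos[OF l] d_pos[OF k] by auto
    thus "L $$ (k,l) * sqrt (d l) = (if k = l then sqrt (d l) else 0) - w k l / sqrt (d k)"
      using k l by (auto simp: L_entry field_simps)
  qed
  also have "\<dots> = sqrt (d k) - d k / sqrt (d k)" using k 
    by (simp add: sum_subtractf d_def' sum_divide_distrib)
  also have "\<dots> = 0" using d_pos[OF k] by (simp add: field_simps)
  finally show ?thesis .
qed

lemma symL: "k < n \<Longrightarrow> l < n \<Longrightarrow> L $$ (k,l) = L $$ (l,k)"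
  using L_entry wsym by (auto simp: mult.commute)

end

locale wspec = wgraph +
  fixes P :: "real mat"
  assumes P: "P \<in> carrier_mat n n" and PtP: "transpose_mat P * P = 1\<^sub>m n"
    and PPt: "P * transpose_mat P = 1\<^sub>m n" and LP: "L * P = P * mat_diag n (\<lambda>i. es ! i)"
begin

definition p where "p i k = P $$ (k, i)"
abbreviation nu where "nu i \<equiv> es ! i"

lemma orth: assumes "i < n" "j < n" shows "(\<Sum>k<n. p i k * p j k) = (if i = j then 1 else 0)"
proof -
  have "(transpose_mat P * P) $$ (i,j) = (\<Sum>k<n. p i k * p j k)"
    using P assms by (auto simp: p_def scalar_prod_def atLeast0LessThan intro!: sum.cong)
  thus ?thesis unfolding PtP using assms by simp
qed

lemma compl: assumes "k < n" "l < n" shows "(\<Sum>i<n. p i k * p i l) = (if k = l then 1 else 0)"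
proof -
  have "(P * transpose_mat P) $$ (k,l) = (\<Sum>i<n. p i k * p i l)"
    using P assms by (auto simp: p_def scalar_prod_def atLeast0LessThan intro!: sum.cong)
  thus ?thesis unfolding PPt using assms by simp
qed

lemma eig: assumes "i < n" "k < n" shows "(\<Sum>l<n. L $$ (k,l) * p i l) = nu i * p i k"
proof -
  have "(L * P) $$ (k,i) = (\<Sum>l<n. L $$ (k,l) * p i l)"
    using P L_carrier assms by (auto simp: p_def scalar_prod_def atLeast0LessThan intro!: sum.cong)
  moreover have "(P * mat_diag n (\<lambda>i. es ! i)) $$ (k,i) = nu i * p i k"
    by (subst mat_diag_mult_right[OF P], insert assms, auto simp: p_def)
  ultimately show ?thesis unfolding LP by simp
qed

lemma nu_quad: assumes i: "i < n" shows "nu i = (\<Sum>k<n. p i k * (\<Sum>l<n. L $$ (k,l) * p i l))"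
proof -
  have "(\<Sum>k<n. p i k * (\<Sum>l<n. L $$ (k,l) * p i l)) = (\<Sum>k<n. nu i * (p i k * p i k))"
    by (intro sum.cong refl, simp add: eig i)
  also have "\<dots> = nu i" using orth[OF i i] by (simp add: sum_distrib_left[symmetric])
  finally show ?thesis by simp
qed

lemma p_sq: "i < n \<Longrightarrow> (\<Sum>k<n. (p i k)^2) = 1"
  using orth[of i i] by (simp add: power2_eq_square)

lemma nu_nonneg: "i < n \<Longrightarrow> 0 \<le> nu i"
  using nu_quad quad_nonneg by simp

lemma nu_le2: "i < n \<Longrightarrow> nu i \<le> 2"
  using nu_quad quad_le[of "p i"] p_sq by simp

lemma p_bound: assumes i: "i < n" and k: "k < n" shows "\<bar>p i k\<bar> \<le> 1"
proof -
  have "(p i k)^2 \<le> (\<Sum>k<n. (p i k)^2)"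
    by (rule member_le_sum[of k "{..<n}" "\<lambda>k. (p i k)^2"], insert k, auto)
  hence "(p i k)^2 \<le> 1" using p_sq[OF i] by simp
  thus ?thesis by (simp add: abs_square_le_1)
qed

lemma nu_mono: "i \<le> j \<Longrightarrow> j < n \<Longrightarrow> nu i \<le> nu j"
  using es_props by (auto intro: sorted_nth_mono)

lemma nu0: "nu 0 = 0"
proof -
  define c where "c i = (\<Sum>k<n. p i k * sqrt (d k))" for i
  have nc: "nu i * c i = 0" if i: "i < n" for i
  proof -
    have "nu i * c i = (\<Sum>k<n. (\<Sum>l<n. L $$ (k,l) * p i l) * sqrt (d k))"
      unfolding c_def sum_distrib_left by (intro sum.cong refl, simp add: eig i)
    also have "\<dots> = (\<Sum>k<n. \<Sum>l<n. p i l * (L $$ (l,k) * sqrt (d k)))"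
      by (intro sum.cong refl, auto simp: sum_distrib_right symL intro!: sum.cong)
    also have "\<dots> = (\<Sum>l<n. \<Sum>k<n. p i l * (L $$ (l,k) * sqrt (d k)))" by (rule sum.swap)
    also have "\<dots> = (\<Sum>l<n. p i l * (\<Sum>k<n. L $$ (l,k) * sqrt (d k)))"
      by (simp add: sum_distrib_left)
    also have "\<dots> = 0" by (intro sum.neutral, auto simp: g_kernel)
    finally show ?thesis .
  qed
  have "\<exists>i<n. nu i = 0"
  proof (rule ccontr)
    assume "\<not> ?thesis"
    hence c0: "c i = 0" if "i < n" for i using nc[OF that] that by auto
    have "(\<Sum>k<n. sqrt (d k) * (\<Sum>i<n. p i k * p i 0)) = (\<Sum>k<n. if k = 0 then sqrt (d k) else 0)"
      using n2 by (intro sum.cong refl, auto simp: compl)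
    also have "\<dots> = sqrt (d 0)" using n2 by (simp add: sum.delta')
    finally have "sqrt (d 0) = (\<Sum>k<n. sqrt (d k) * (\<Sum>i<n. p i k * p i 0))" by simp
    also have "\<dots> = (\<Sum>k<n. \<Sum>i<n. p i 0 * (p i k * sqrt (d k)))"
      by (simp add: sum_distrib_left algebra_simps)
    also have "\<dots> = (\<Sum>i<n. \<Sum>k<n. p i 0 * (p i k * sqrt (d k)))" by (rule sum.swap)
    also have "\<dots> = (\<Sum>i<n. p i 0 * c i)" unfolding c_def by (simp add: sum_distrib_left)
    also have "\<dots> = 0" by (intro sum.neutral, auto simp: c0)
    finally show False using d_pos[of 0] n2 by simp
  qed
  then obtain i where i: "i < n" "nu i = 0" by auto
  from nu_mono[of 0 i] i nu_nonneg[of 0] show ?thesis by simp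
qed

lemma dnn: "k < n \<Longrightarrow> 0 \<le> d k" using d_pos[of k] by simp

lemma vol_pos: "0 < (\<Sum>k<n. d k)"
proof -
  have "0 \<in> {..<n}" using n2 by simp
  hence "{..<n} \<noteq> {}" by blast
  thus ?thesis by (intro sum_pos) (auto simp: d_pos)
qed

lemma p_ker: assumes i: "i < n" and nz: "nu i = 0"
  shows "\<exists>a. a^2 * (\<Sum>k<n. d k) = 1 \<and> (\<forall>k<n. p i k = a * sqrt (d k))"
proof -
  define a where "a = p i 0 / sqrt (d 0)"
  have pk: "\<forall>k<n. p i k = a * sqrt (d k)" unfolding a_def
    by (rule quad_zero, insert nu_quad[OF i] nz, simp)
  have "1 = (\<Sum>k<n. (p i k)^2)" using p_sq[OF i] by simp
  also have "\<dots> = (\<Sum>k<n. a^2 * d k)" 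
    by (intro sum.cong refl, insert pk dnn, auto simp: power_mult_distrib)
  finally show ?thesis using pk by (auto simp: sum_distrib_left)
qed

lemma nu1_pos: "0 < nu 1"
proof (rule ccontr)
  assume "\<not> ?thesis"
  hence z: "nu 1 = 0" using nu_nonneg[of 1] n2 by simp
  from p_ker[of 0] nu0 n2 obtain a where a: "a^2 * (\<Sum>k<n. d k) = 1" "\<forall>k<n. p 0 k = a * sqrt (d k)" by auto
  from p_ker[of 1] z n2 obtain b where b: "b^2 * (\<Sum>k<n. d k) = 1" "\<forall>k<n. p 1 k = b * sqrt (d k)" by auto
  have "0 = (\<Sum>k<n. p 0 k * p 1 k)" using orth[of 0 1] n2 by simp
  also have "\<dots> = (\<Sum>k<n. a * b * d k)" 
    by (intro sum.cong refl, insert a b dnn, auto simp: algebra_simps)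
  also have "\<dots> = a * b * (\<Sum>k<n. d k)" by (simp add: sum_distrib_left)
  finally have "a * b = 0" using vol_pos by simp
  thus False using a b by auto
qed

end

lemma pow_mat_Suc_left: assumes A: "(A :: 'a :: semiring_1 mat) \<in> carrier_mat n n"
  shows "A ^\<^sub>m Suc k = A * A ^\<^sub>m k"
proof (induct k)
  case 0 thus ?case using A by simp
next
  case (Suc k)
  have "A ^\<^sub>m Suc (Suc k) = (A * A ^\<^sub>m k) * A" using Suc by simp
  also have "\<dots> = A * (A ^\<^sub>m k * A)" using A by (simp add: assoc_mult_mat[of _ n n _ n _ n])
  finally show ?case by simp
qed

context wspec begin

lemma L_comb: assumes v: "v < n"
  shows "(\<Sum>j<n. L $$ (v,j) * (\<Sum>i<n. a i * p i j)) = (\<Sum>i<n. a i * nu i * p i v)"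
proof -
  have "(\<Sum>j<n. L $$ (v,j) * (\<Sum>i<n. a i * p i j)) = (\<Sum>j<n. \<Sum>i<n. a i * (L $$ (v,j) * p i j))"
    by (simp add: sum_distrib_left algebra_simps)
  also have "\<dots> = (\<Sum>i<n. \<Sum>j<n. a i * (L $$ (v,j) * p i j))" by (rule sum.swap)
  also have "\<dots> = (\<Sum>i<n. a i * nu i * p i v)"
    by (intro sum.cong refl, simp add: sum_distrib_left[symmetric] eig v)
  finally show ?thesis .
qed

lemma walk_step: assumes v: "v < n"
  shows "(\<Sum>j<n. w v j * (sqrt (d j) * h j) / d j) = sqrt (d v) * (h v - (\<Sum>j<n. L $$ (v,j) * h j))"
proof -
  have sv: "sqrt (d v) > 0" using d_pos[OF v] by simp
  have "(\<Sum>j<n. L $$ (v,j) * h j) = (\<Sum>j<n. (if v = j then h j else 0) - w v j * h j / (sqrt (d v) * sqrt (d j)))"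
    by (intro sum.cong refl, insert v, auto simp: L_entry algebra_simps)
  also have "\<dots> = h v - (\<Sum>j<n. w v j * h j / (sqrt (d v) * sqrt (d j)))"
    using v by (simp add: sum_subtractf)
  finally have "sqrt (d v) * (h v - (\<Sum>j<n. L $$ (v,j) * h j)) = sqrt (d v) * (\<Sum>j<n. w v j * h j / (sqrt (d v) * sqrt (d j)))"
    by simp
  also have "\<dots> = (\<Sum>j<n. w v j * h j / sqrt (d j))"
    unfolding sum_distrib_left by (intro sum.cong refl, insert sv, simp add: field_simps)
  also have "\<dots> = (\<Sum>j<n. w v j * (sqrt (d j) * h j) / d j)"
  proof (intro sum.cong refl)
    fix j assume "j \<in> {..<n}"
    hence sj: "sqrt (d j) > 0" using d_pos[of j] by simp
    have "d j = sqrt (d j) * sqrt (d j)" using sj by simp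
    thus "w v j * h j / sqrt (d j) = w v j * (sqrt (d j) * h j) / d j" using sj
      by (metis (no_types, lifting) mult.left_commute nonzero_mult_divide_mult_cancel_left times_divide_eq_right order_less_irrefl)
  qed
  finally show ?thesis by simp
qed

end

locale wwalk = wspec +
  fixes u assumes u: "u < n"
begin

definition F where "F t = (M ^\<^sub>m t) *\<^sub>v unit_vec n u"

lemma F_carrier: "F t \<in> carrier_vec n"
  unfolding F_def using M_carrier by (auto intro!: carrier_vecI)

lemma F_Suc: "F (Suc t) = M *\<^sub>v F t"
  unfolding F_def pow_mat_Suc_left[OF M_carrier]
  by (rule assoc_mult_mat_vec[of _ n n _ n], insert M_carrier, auto)

lemma F_0: "F 0 = unit_vec n u"
  unfolding F_def using M_carrier by auto

lemma F_rec: "v < n \<Longrightarrow> F (Suc t) $ v = F t $ v / 2 + (\<Sum>j<n. w v j * F t $ j / d j) / 2"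
  unfolding F_Suc by (rule M_mult[OF F_carrier])

lemma F_nonneg: "v < n \<Longrightarrow> 0 \<le> F t $ v"
proof (induct t arbitrary: v)
  case 0 thus ?case unfolding F_0 using u by simp
next
  case (Suc t)
  have "0 \<le> (\<Sum>j<n. w v j * F t $ j / d j)"
    by (intro sum_nonneg divide_nonneg_nonneg mult_nonneg_nonneg, insert Suc wnn dnn, auto)
  thus ?case unfolding F_rec[OF Suc(2)] using Suc(1)[OF Suc(2)] by simp
qed

lemma F_sum: "(\<Sum>v<n. F t $ v) = 1"
proof (induct t)
  case 0 thus ?case unfolding F_0 using u by (simp add: sum.delta)
next
  case (Suc t)
  have "(\<Sum>v<n. F (Suc t) $ v) = (\<Sum>v<n. F t $ v) / 2 + (\<Sum>v<n. \<Sum>j<n. w v j * F t $ j / d j) / 2"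
    by (simp add: F_rec sum.distrib sum_divide_distrib)
  also have "(\<Sum>v<n. \<Sum>j<n. w v j * F t $ j / d j) = (\<Sum>j<n. \<Sum>v<n. w v j * F t $ j / d j)"
    by (rule sum.swap)
  also have "\<dots> = (\<Sum>j<n. F t $ j)"
  proof (intro sum.cong refl)
    fix j assume "j \<in> {..<n}"
    hence j: "j < n" by simp
    have "(\<Sum>v<n. w v j * F t $ j / d j) = (\<Sum>v<n. w j v) * F t $ j / d j"
      by (simp add: sum_distrib_right sum_divide_distrib wsym j)
    also have "\<dots> = F t $ j" using d_pos[OF j] by (simp add: d_def'[symmetric])
    finally show "(\<Sum>v<n. w v j * F t $ j / d j) = F t $ j" .
  qed
  finally show ?case using Suc by simp
qed

definition mu where "mu i = 1 - nu i / 2"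

lemma F_formula: "v < n \<Longrightarrow> F t $ v = sqrt (d v) * (\<Sum>i<n. mu i ^ t * (p i u / sqrt (d u)) * p i v)"
proof (induct t arbitrary: v)
  case 0
  have "(\<Sum>i<n. mu i ^ 0 * (p i u / sqrt (d u)) * p i v) = (\<Sum>i<n. p i u * p i v) / sqrt (d u)"
    by (simp add: sum_divide_distrib)
  also have "\<dots> = (if u = v then 1 else 0) / sqrt (d u)" using compl[OF u 0] by simp
  finally show ?case unfolding F_0 using 0 u d_pos[OF u] by auto
next
  case (Suc t v)
  define h where "h j = (\<Sum>i<n. mu i ^ t * (p i u / sqrt (d u)) * p i j)" for j
  have Ft: "F t $ j = sqrt (d j) * h j" if "j < n" for j using Suc(1)[OF that] unfolding h_def .
  have "(\<Sum>j<n. w v j * F t $ j / d j) = (\<Sum>j<n. w v j * (sqrt (d j) * h j) / d j)"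
    by (intro sum.cong refl, simp add: Ft)
  also have "\<dots> = sqrt (d v) * (h v - (\<Sum>j<n. L $$ (v,j) * h j))" by (rule walk_step[OF Suc(2)])
  also have "(\<Sum>j<n. L $$ (v,j) * h j) = (\<Sum>i<n. mu i ^ t * (p i u / sqrt (d u)) * nu i * p i v)"
    unfolding h_def by (rule L_comb[OF Suc(2)])
  finally have "F (Suc t) $ v = sqrt (d v) * (h v - (\<Sum>i<n. mu i ^ t * (p i u / sqrt (d u)) * nu i * p i v) / 2)"
    unfolding F_rec[OF Suc(2)] Ft[OF Suc(2)] by (simp add: algebra_simps)
  also have "h v - (\<Sum>i<n. mu i ^ t * (p i u / sqrt (d u)) * nu i * p i v) / 2 
     = (\<Sum>i<n. mu i ^ Suc t * (p i u / sqrt (d u)) * p i v)"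
    unfolding h_def mu_def by (simp add: sum_subtractf sum_divide_distrib[symmetric] algebra_simps)
  finally show ?case .
qed

end

lemma series_split_bound:
  fixes a :: "nat \<Rightarrow> real"
  assumes sa: "summable a" and a2: "\<And>t. a t \<le> 2" and aK: "\<And>t. a t \<le> K * lam ^ t"
    and lam: "0 \<le> lam" "lam < 1"
  shows "suminf a \<le> 2 * real T + K * lam ^ T / (1 - lam)"
proof -
  have sg: "summable (\<lambda>t. K * lam ^ (t + T))"
    by (rule summable_mult, rule summable_ignore_initial_segment, rule summable_geometric, insert lam, simp)
  have "suminf a = (\<Sum>t. a (t + T)) + (\<Sum>i<T. a i)" by (rule suminf_split_initial_segment[OF sa])
  also have "(\<Sum>i<T. a i) \<le> (\<Sum>i<T. 2)" by (rule sum_mono, rule a2)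
  also have "(\<Sum>t. a (t + T)) \<le> (\<Sum>t. K * lam ^ (t + T))"
    by (rule suminf_le, rule aK, rule summable_ignore_initial_segment[OF sa], rule sg)
  also have "(\<Sum>t. K * lam ^ (t + T)) = (K * lam ^ T) * (\<Sum>t. lam ^ t)"
    by (subst suminf_mult[symmetric], rule summable_geometric, insert lam, simp, simp add: power_add algebra_simps)
  also have "(\<Sum>t. lam ^ t) = 1 / (1 - lam)" by (rule suminf_geometric, insert lam, simp)
  finally show ?thesis by simp
qed

lemma final_arith:
  fixes nu K Lg :: real
  assumes nu: "0 < nu" "nu \<le> 2" and K: "1 \<le> K" and KL: "ln K \<le> 3 * Lg" and Lg: "1/2 \<le> Lg"
  shows "2 * real (nat \<lceil>2 * ln K / nu\<rceil>) + K * (1 - nu/2) ^ (nat \<lceil>2 * ln K / nu\<rceil>) / (1 - (1 - nu/2)) 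
     \<le> 24 * (1 / nu) * Lg"
proof -
  define T where "T = nat \<lceil>2 * ln K / nu\<rceil>"
  have lnK: "0 \<le> ln K" using K by simp
  have x0: "0 \<le> 2 * ln K / nu" using lnK nu by simp
  have T1: "2 * ln K / nu \<le> real T" unfolding T_def using x0 
    by (metis le_of_int_ceiling of_nat_nat ceiling_mono ceiling_zero of_int_le_iff order_trans)
  have T2: "real T \<le> 2 * ln K / nu + 1" unfolding T_def using x0 ceiling_correct[of "2 * ln K / nu"]
    by (simp add: of_nat_nat)
  have lam: "0 \<le> 1 - nu/2" using nu by simp
  have "(1 - nu/2) ^ T \<le> exp (- nu/2) ^ T"
    by (rule power_mono, insert exp_ge_add_one_self[of "-nu/2"] lam, auto)
  also have "\<dots> = exp (- (nu/2 * real T))" by (subst exp_of_nat_mult[symmetric], simp add: algebra_simps)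
  also have "\<dots> \<le> exp (- ln K)" using T1 nu by (simp add: field_simps)
  also have "\<dots> = 1 / K" using K by (simp add: exp_minus inverse_eq_divide)
  finally have "K * (1 - nu/2) ^ T \<le> 1" using K by (simp add: field_simps)
  hence A: "K * (1 - nu/2) ^ T / (1 - (1 - nu/2)) \<le> 2 / nu" using nu by (simp add: divide_right_mono)
  have "2 * real T + K * (1 - nu/2) ^ T / (1 - (1 - nu/2)) \<le> 2 * (2 * ln K / nu + 1) + 2 / nu"
    using add_mono[OF mult_left_mono[OF T2, of 2] A] by simp
  also have "\<dots> \<le> 12 * (Lg / nu) + 2 + 2 / nu" using KL nu by (simp add: field_simps)
  finally have X: "2 * real T + K * (1 - nu/2) ^ T / (1 - (1 - nu/2)) \<le> 12 * (Lg / nu) + 2 + 2 / nu" .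
  have B: "2 \<le> 8 * (Lg / nu)" using Lg nu by (simp add: field_simps)
  have C: "2 / nu \<le> 4 * (Lg / nu)" using Lg nu by (simp add: field_simps)
  have "24 * (1 / nu) * Lg = 24 * (Lg / nu)" by simp
  thus ?thesis unfolding T_def[symmetric] using X B C by linarith
qed


context wwalk begin

abbreviation vol where "vol \<equiv> (\<Sum>k<n. d k)"
abbreviation lam where "lam \<equiv> 1 - nu 1 / 2"

lemma lam_bounds: "0 \<le> lam" "lam < 1"
  using nu_le2[of 1] nu1_pos n2 by auto

lemma mu_bounds: assumes "1 \<le> i" "i < n" shows "0 \<le> mu i" "mu i \<le> lam"
  using nu_le2[of i] nu_mono[of 1 i] assms unfolding mu_def by auto

lemma term_eq: "v < n \<Longrightarrow> sigma_term n w u t $ v = F t $ v - d v / vol"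
  unfolding sigma_term_def F_def[symmetric] stat_dist_def by simp

lemma term_formula: assumes v: "v < n"
  shows "F t $ v - d v / vol = sqrt (d v) * (\<Sum>i\<in>{1..<n}. mu i ^ t * (p i u / sqrt (d u)) * p i v)"
proof -
  from p_ker[of 0] nu0 n2 obtain a where a: "a^2 * vol = 1" "\<forall>k<n. p 0 k = a * sqrt (d k)" by auto
  have mu0: "mu 0 = 1" unfolding mu_def nu0 by simp
  have "(\<Sum>i<n. mu i ^ t * (p i u / sqrt (d u)) * p i v) = (\<Sum>i\<in>{0..<n}. mu i ^ t * (p i u / sqrt (d u)) * p i v)"
    by (simp add: atLeast0LessThan)
  also have "\<dots> = mu 0 ^ t * (p 0 u / sqrt (d u)) * p 0 v + (\<Sum>i\<in>{1..<n}. mu i ^ t * (p i u / sqrt (d u)) * p i v)"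
    using n2 by (subst sum.atLeast_Suc_lessThan, auto)
  also have "mu 0 ^ t * (p 0 u / sqrt (d u)) * p 0 v = a^2 * sqrt (d v)"
    using a(2) u v d_pos[OF u] mu0 by (simp add: power2_eq_square)
  finally have "F t $ v = sqrt (d v) * (a^2 * sqrt (d v)) + sqrt (d v) * (\<Sum>i\<in>{1..<n}. mu i ^ t * (p i u / sqrt (d u)) * p i v)"
    unfolding F_formula[OF v] by (simp add: algebra_simps)
  also have "sqrt (d v) * (a^2 * sqrt (d v)) = d v / vol"
    using a(1) dnn[OF v] vol_pos by (simp add: field_simps)
  finally show ?thesis by linarith
qed

lemma term_bound1: assumes v: "v < n"
  shows "\<bar>sigma_term n w u t $ v\<bar> \<le> real n * real n * W * lam ^ t"
proof -
  have su: "1 \<le> sqrt (d u)" using d_ge1[OF u] by simp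
  have spos: "0 < sqrt (d u)" using su by simp
  have each: "\<bar>mu i ^ t * (p i u / sqrt (d u)) * p i v\<bar> \<le> lam ^ t" if i: "i \<in> {1..<n}" for i
  proof -
    from i have i1: "1 \<le> i" "i < n" by auto
    have m1: "mu i ^ t \<le> lam ^ t" by (rule power_mono) (use mu_bounds[OF i1] in auto)
    have m2: "0 \<le> mu i ^ t" using mu_bounds(1)[OF i1] by (rule zero_le_power)
    have m: "\<bar>mu i ^ t\<bar> \<le> lam ^ t" using m1 m2 by (simp only: abs_of_nonneg)
    have pu: "\<bar>p i u\<bar> \<le> sqrt (d u)" using p_bound[OF i1(2) u] su by linarith
    have "\<bar>p i u / sqrt (d u)\<bar> = \<bar>p i u\<bar> / sqrt (d u)" using spos by (simp add: abs_divide)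
    also have "\<dots> \<le> 1" using pu spos by (simp only: divide_le_eq_1_pos)
    finally have q: "\<bar>p i u / sqrt (d u)\<bar> \<le> 1" .
    have r: "\<bar>p i v\<bar> \<le> 1" using p_bound[OF i1(2) v] .
    have lp: "0 \<le> lam ^ t" by (rule zero_le_power[OF lam_bounds(1)])
    have h1: "\<bar>mu i ^ t\<bar> * \<bar>p i u / sqrt (d u)\<bar> \<le> lam ^ t * 1"
      by (rule mult_mono[OF m q lp abs_ge_zero])
    have "\<bar>mu i ^ t\<bar> * \<bar>p i u / sqrt (d u)\<bar> * \<bar>p i v\<bar> \<le> (lam ^ t * 1) * 1"
      using mult_mono[OF h1 r] lp by simp
    thus ?thesis by (simp add: abs_mult)
  qed
  have S: "\<bar>\<Sum>i\<in>{1..<n}. mu i ^ t * (p i u / sqrt (d u)) * p i v\<bar> \<le> real n * lam ^ t"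
  proof -
    have "\<bar>\<Sum>i\<in>{1..<n}. mu i ^ t * (p i u / sqrt (d u)) * p i v\<bar> \<le> (\<Sum>i\<in>{1..<n}. lam ^ t)"
      by (rule order.trans[OF sum_abs sum_mono], rule each)
    also have "(\<Sum>i\<in>{1..<n}. lam ^ t) = real (n - 1) * lam ^ t" by simp
    also have "\<dots> \<le> real n * lam ^ t" using lam_bounds by (intro mult_right_mono, auto)
    finally show ?thesis .
  qed
  have sd: "sqrt (d v) \<le> real n * W"
  proof -
    have s1: "1 \<le> sqrt (d v)" using d_ge1[OF v] by simp
    have "sqrt (d v) = sqrt (d v) * 1" by simp
    also have "\<dots> \<le> sqrt (d v) * sqrt (d v)" using s1 by (intro mult_left_mono) auto
    also have "\<dots> = d v" using dnn[OF v] by simp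
    also have "\<dots> \<le> real n * W" by (rule d_le[OF v])
    finally show ?thesis .
  qed
  have "\<bar>sigma_term n w u t $ v\<bar> = sqrt (d v) * \<bar>\<Sum>i\<in>{1..<n}. mu i ^ t * (p i u / sqrt (d u)) * p i v\<bar>"
    unfolding term_eq[OF v] term_formula[OF v] using dnn[OF v] by (simp add: abs_mult)
  also have "\<dots> \<le> (real n * W) * (real n * lam ^ t)"
    using mult_mono[OF sd S _ abs_ge_zero] W1 by simp
  finally show ?thesis by (simp add: algebra_simps)
qed

lemma term_bound2: "(\<Sum>v<n. \<bar>sigma_term n w u t $ v\<bar>) \<le> 2"
proof -
  have "(\<Sum>v<n. \<bar>sigma_term n w u t $ v\<bar>) \<le> (\<Sum>v<n. F t $ v + d v / vol)"
  proof (rule sum_mono)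
    fix v assume "v \<in> {..<n}"
    hence v: "v < n" by simp
    have "0 \<le> F t $ v" "0 \<le> d v / vol" using F_nonneg[OF v] dnn[OF v] vol_pos by auto
    thus "\<bar>sigma_term n w u t $ v\<bar> \<le> F t $ v + d v / vol" unfolding term_eq[OF v] 
      by (simp add: abs_le_iff)
  qed
  also have "\<dots> = 1 + vol / vol" by (simp add: sum.distrib F_sum sum_divide_distrib[symmetric])
  also have "\<dots> = 2" using vol_pos by simp
  finally show ?thesis .
qed

lemma term_summable: assumes v: "v < n" shows "summable (\<lambda>t. \<bar>sigma_term n w u t $ v\<bar>)"
proof (rule summable_comparison_test'[of "\<lambda>t. (real n * real n * W) * lam ^ t" 0])
  show "summable (\<lambda>t. (real n * real n * W) * lam ^ t)"
    by (rule summable_mult, rule summable_geometric, insert lam_bounds, simp)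
  fix t show "norm \<bar>sigma_term n w u t $ v\<bar> \<le> real n * real n * W * lam ^ t"
    using term_bound1[OF v, of t] by simp
qed

lemma main_bound:
  "(\<forall>v<n. summable (\<lambda>t. sigma_term n w u t $ v)) \<and>
   norm1_vec (sigma_vec n w u) \<le> 12 * (1 / nu 1) * ln (real n * W)"
proof
  show sm: "\<forall>v<n. summable (\<lambda>t. sigma_term n w u t $ v)"
  proof (intro allI impI)
    fix v assume "v < n"
    thus "summable (\<lambda>t. sigma_term n w u t $ v)" by (rule summable_rabs_cancel[OF term_summable])
  qed
  define a where "a t = (\<Sum>v<n. \<bar>sigma_term n w u t $ v\<bar>)" for t
  define K where "K = real n * (real n * real n * W)"
  have sa: "summable a" unfolding a_def by (rule summable_sum, simp add: term_summable)
  have e1: "norm1_vec (sigma_vec n w u) = (\<Sum>v<n. \<bar>(1/2) * (\<Sum>t. sigma_term n w u t $ v)\<bar>)"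
    unfolding norm1_vec_def sigma_vec_def by simp
  have e2: "(\<Sum>v<n. \<bar>(1/2) * (\<Sum>t. sigma_term n w u t $ v)\<bar>) \<le> (\<Sum>v<n. (1/2) * (\<Sum>t. \<bar>sigma_term n w u t $ v\<bar>))"
  proof (rule sum_mono)
    fix v assume "v \<in> {..<n}"
    hence v: "v < n" by simp
    have "\<bar>\<Sum>t. sigma_term n w u t $ v\<bar> \<le> (\<Sum>t. \<bar>sigma_term n w u t $ v\<bar>)"
      by (rule summable_rabs[OF term_summable[OF v]])
    thus "\<bar>(1/2) * (\<Sum>t. sigma_term n w u t $ v)\<bar> \<le> (1/2) * (\<Sum>t. \<bar>sigma_term n w u t $ v\<bar>)"
      by (simp add: abs_mult)
  qed
  have e3: "(\<Sum>v<n. (1/2) * (\<Sum>t. \<bar>sigma_term n w u t $ v\<bar>)) = (1/2) * suminf a"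
  proof -
    have "suminf a = (\<Sum>v<n. \<Sum>t. \<bar>sigma_term n w u t $ v\<bar>)"
      unfolding a_def by (rule suminf_sum, rule term_summable, simp)
    thus ?thesis by (simp add: sum_distrib_left)
  qed
  have e4: "suminf a \<le> 2 * real (nat \<lceil>2 * ln K / nu 1\<rceil>) + K * lam ^ (nat \<lceil>2 * ln K / nu 1\<rceil>) / (1 - lam)"
  proof (rule series_split_bound[OF sa _ _ lam_bounds])
    show "a t \<le> 2" for t unfolding a_def by (rule term_bound2)
    show "a t \<le> K * lam ^ t" for t
    proof -
      have "a t \<le> (\<Sum>v<n. real n * real n * W * lam ^ t)" unfolding a_def
        by (rule sum_mono, rule term_bound1, simp)
      thus ?thesis unfolding K_def by (simp add: algebra_simps)
    qed
  qed
  have e5: "2 * real (nat \<lceil>2 * ln K / nu 1\<rceil>) + K * lam ^ (nat \<lceil>2 * ln K / nu 1\<rceil>) / (1 - lam) \<le> 24 * (1 / nu 1) * ln (real n * W)"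
  proof (rule final_arith)
    show "0 < nu 1" by (rule nu1_pos)
    show "nu 1 \<le> 2" using nu_le2[of 1] n2 by simp
    have n1: "1 \<le> real n" using n2 by simp
    have "1 * (1 * 1 * 1) \<le> real n * (real n * real n * W)"
      by (intro mult_mono) (use n1 W1 in auto)
    thus K1: "1 \<le> K" unfolding K_def by simp
    have "K \<le> (real n * W) ^ 3"
    proof -
      have "W * 1 * 1 \<le> W * W * W" by (intro mult_mono) (use W1 in auto)
      hence "W \<le> W ^ 3" by (simp add: power3_eq_cube)
      hence "real n * (real n * real n * W) \<le> real n * (real n * real n * W^3)"
        using n1 by (intro mult_left_mono, auto)
      thus ?thesis by (simp add: K_def power3_eq_cube algebra_simps)
    qed
    hence "ln K \<le> ln ((real n * W) ^ 3)" using K1 by (intro ln_mono) auto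
    thus "ln K \<le> 3 * ln (real n * W)" using n1 W1 by (simp add: ln_realpow)
    have "ln (1/2::real) \<le> 1/2 - 1" by (rule ln_le_minus_one, simp)
    hence "1/2 \<le> ln (2::real)" by (simp add: ln_div)
    also have "ln 2 \<le> ln (real n * W)"
    proof (rule ln_mono)
      have "2 * 1 \<le> real n * W" by (intro mult_mono) (use n2 W1 in auto)
      thus "2 \<le> real n * W" by simp
    qed simp
    finally show "1/2 \<le> ln (real n * W)" .
  qed
  show "norm1_vec (sigma_vec n w u) \<le> 12 * (1 / nu 1) * ln (real n * W)"
    using e1 e2 e3 e4 e5 by linarith
qed

end

theorem lemma3p5:
  "\<exists>C::real. \<forall>(n::nat) (w::nat \<Rightarrow> nat \<Rightarrow> real) (W::real) (u::nat).
     2 \<le> n \<longrightarrow> 1 \<le> W \<longrightarrow> weighted_graph n w W \<longrightarrow> connected_graph n w \<longrightarrow> u < n \<longrightarrow>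
       (\<forall>v<n. summable (\<lambda>t. sigma_term n w u t $ v)) \<and>
       norm1_vec (sigma_vec n w u)
         \<le> C * (1 / second_smallest_eigenvalue (norm_laplacian n w)) * ln (real n * W)"
proof (intro exI[of _ 12] allI impI)
  fix n w W u
  assume a: "2 \<le> n" "1 \<le> W" "weighted_graph n w W" "connected_graph n w" "u < n"
  interpret wgraph n w W by (unfold_locales, insert a, auto)
  from exists_P obtain P where P: "P \<in> carrier_mat n n" "transpose_mat P * P = 1\<^sub>m n"
    "P * transpose_mat P = 1\<^sub>m n" "norm_laplacian n w * P = P * mat_diag n (\<lambda>i. sorted_eigenvalues (norm_laplacian n w) ! i)"
    by blast
  interpret wwalk n w W P u by (unfold_locales, insert P a, auto)
  show "(\<forall>v<n. summable (\<lambda>t. sigma_term n w u t $ v)) \<and>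
       norm1_vec (sigma_vec n w u)
         \<le> 12 * (1 / second_smallest_eigenvalue (norm_laplacian n w)) * ln (real n * W)"
    using main_bound unfolding second_smallest_eigenvalue_def by simp
qed

end
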